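(* Let $\tilde{Q}$ be a finite connected quandle and $p:\tilde{Q}\to Q$ a covering. If $\Lambda$ is a subgroup of $\mathrm{Aut}(p)$ which acts transitively on each fiber of $p$, then $\Lambda=\mathrm{Aut}(p)$ and each fiber has cardinality $|\Lambda|$.
   Context: A quandle is a set with operation $*$ satisfying $a*a=a$; unique right division; $(a*b)*c=(a*c)*(b*c)$. $R_a(y)=y*a$; connected means the group generated by the $R_a$ acts transitively. A covering is a quandle epimorphism $p:\tilde Q\to Q$ with $p(y_1)=p(y_2)\Rightarrow R_{y_1}=R_{y_2}$; $\mathrm{Aut}(p)$ is the group of automorphisms $\lambda$ of $\tilde Q$ with $p\circ\lambda=p$. *)

theory Defs
  imports Main
begin

text \<open>A quandle with carrier A and operation op (op y a = y * a).\<close>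
definition quandle :: "'a set \<Rightarrow> ('a \<Rightarrow> 'a \<Rightarrow> 'a) \<Rightarrow> bool" where
  "quandle A op \<longleftrightarrow>
     (\<forall>a\<in>A. \<forall>b\<in>A. op a b \<in> A) \<and>
     (\<forall>a\<in>A. op a a = a) \<and>
     (\<forall>a\<in>A. \<forall>b\<in>A. \<exists>!x. x \<in> A \<and> op x a = b) \<and>
     (\<forall>a\<in>A. \<forall>b\<in>A. \<forall>c\<in>A. op (op a b) c = op (op a c) (op b c))"

text \<open>Orbit of x under the group generated by the right translations R_a (y maps to op y a)
  and their inverses.\<close>
inductive_set inner_orbit :: "'a set \<Rightarrow> ('a \<Rightarrow> 'a \<Rightarrow> 'a) \<Rightarrow> 'a \<Rightarrow> 'a set"
  for A op x where
  base: "x \<in> A \<Longrightarrow> x \<in> inner_orbit A op x"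
| right: "y \<in> inner_orbit A op x \<Longrightarrow> a \<in> A \<Longrightarrow> op y a \<in> inner_orbit A op x"
| right_inv: "y \<in> inner_orbit A op x \<Longrightarrow> a \<in> A \<Longrightarrow> z \<in> A \<Longrightarrow> op z a = y
               \<Longrightarrow> z \<in> inner_orbit A op x"

definition connected_quandle :: "'a set \<Rightarrow> ('a \<Rightarrow> 'a \<Rightarrow> 'a) \<Rightarrow> bool" where
  "connected_quandle A op \<longleftrightarrow> quandle A op \<and> (\<forall>x\<in>A. \<forall>y\<in>A. y \<in> inner_orbit A op x)"

definition quandle_hom ::
  "'a set \<Rightarrow> ('a \<Rightarrow> 'a \<Rightarrow> 'a) \<Rightarrow> 'b set \<Rightarrow> ('b \<Rightarrow> 'b \<Rightarrow> 'b) \<Rightarrow> ('a \<Rightarrow> 'b) \<Rightarrow> bool" where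
  "quandle_hom A opA B opB f \<longleftrightarrow>
     (\<forall>x\<in>A. f x \<in> B) \<and> (\<forall>x\<in>A. \<forall>y\<in>A. f (opA x y) = opB (f x) (f y))"

definition covering ::
  "'a set \<Rightarrow> ('a \<Rightarrow> 'a \<Rightarrow> 'a) \<Rightarrow> 'b set \<Rightarrow> ('b \<Rightarrow> 'b \<Rightarrow> 'b) \<Rightarrow> ('a \<Rightarrow> 'b) \<Rightarrow> bool" where
  "covering A opA B opB p \<longleftrightarrow>
     quandle A opA \<and> quandle B opB \<and> quandle_hom A opA B opB p \<and> p ` A = B \<and>
     (\<forall>y1\<in>A. \<forall>y2\<in>A. p y1 = p y2 \<longrightarrow> (\<forall>x\<in>A. opA x y1 = opA x y2))"

definition cov_aut :: "'a set \<Rightarrow> ('a \<Rightarrow> 'a \<Rightarrow> 'a) \<Rightarrow> ('a \<Rightarrow> 'b) \<Rightarrow> ('a \<Rightarrow> 'a) set" where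
  "cov_aut A opA p = {f. bij_betw f A A \<and> quandle_hom A opA A opA f \<and>
       (\<forall>x\<in>A. p (f x) = p x) \<and> (\<forall>x. x \<notin> A \<longrightarrow> f x = x)}"

definition restr_inv :: "'a set \<Rightarrow> ('a \<Rightarrow> 'a) \<Rightarrow> ('a \<Rightarrow> 'a)" where
  "restr_inv A f = (\<lambda>x. if x \<in> A then inv_into A f x else x)"

definition subgroup_of_aut ::
  "('a \<Rightarrow> 'a) set \<Rightarrow> 'a set \<Rightarrow> ('a \<Rightarrow> 'a \<Rightarrow> 'a) \<Rightarrow> ('a \<Rightarrow> 'b) \<Rightarrow> bool" where
  "subgroup_of_aut L A opA p \<longleftrightarrow> L \<subseteq> cov_aut A opA p \<and> id \<in> L \<and>
     (\<forall>f\<in>L. \<forall>g\<in>L. f \<circ> g \<in> L) \<and> (\<forall>f\<in>L. restr_inv A f \<in> L)"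

end

theory Submission
  imports Defs
begin

lemma aut_unique:
  assumes cq: "connected_quandle A opA"
    and cov: "covering A opA B opB p"
    and f: "f \<in> cov_aut A opA p" and g: "g \<in> cov_aut A opA p"
    and x0: "x0 \<in> A" and eq: "f x0 = g x0"
  shows "f = g"
proof -
  have q: "quandle A opA" using cq unfolding connected_quandle_def by blast
  have cl: "\<forall>a\<in>A. \<forall>b\<in>A. opA a b \<in> A"
    using q unfolding quandle_def by blast
  have ud: "\<forall>a\<in>A. \<forall>b\<in>A. \<exists>!x. x \<in> A \<and> opA x a = b"
    using q unfolding quandle_def by (rule conjunct1[OF conjunct2[OF conjunct2]])
  have cv: "\<forall>y1\<in>A. \<forall>y2\<in>A. p y1 = p y2 \<longrightarrow> (\<forall>x\<in>A. opA x y1 = opA x y2)"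
    using cov unfolding covering_def by blast
  have fA: "\<And>x. x \<in> A \<Longrightarrow> f x \<in> A" using f unfolding cov_aut_def quandle_hom_def by blast
  have fh: "\<And>x y. x\<in>A \<Longrightarrow> y\<in>A \<Longrightarrow> f (opA x y) = opA (f x) (f y)" using f unfolding cov_aut_def quandle_hom_def by blast
  have fp: "\<And>x. x\<in>A \<Longrightarrow> p (f x) = p x" using f unfolding cov_aut_def by blast
  have fo: "\<And>x. x \<notin> A \<Longrightarrow> f x = x" using f unfolding cov_aut_def by blast
  have gA: "\<And>x. x \<in> A \<Longrightarrow> g x \<in> A" using g unfolding cov_aut_def quandle_hom_def by blast
  have gh: "\<And>x y. x\<in>A \<Longrightarrow> y\<in>A \<Longrightarrow> g (opA x y) = opA (g x) (g y)" using g unfolding cov_aut_def quandle_hom_def by blast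
  have gp: "\<And>x. x\<in>A \<Longrightarrow> p (g x) = p x" using g unfolding cov_aut_def by blast
  have go: "\<And>x. x \<notin> A \<Longrightarrow> g x = x" using g unfolding cov_aut_def by blast
  have R: "\<And>a y. a \<in> A \<Longrightarrow> y \<in> A \<Longrightarrow> opA y (f a) = opA y (g a)"
  proof -
    fix a y assume a: "a \<in> A" and y: "y \<in> A"
    have "p (f a) = p (g a)" using fp gp a by simp
    then show "opA y (f a) = opA y (g a)" using cv fA[OF a] gA[OF a] y by (meson)
  qed
  have main: "y \<in> inner_orbit A opA x0 \<Longrightarrow> y \<in> A \<and> f y = g y" for y
  proof (induction rule: inner_orbit.induct)
    case base then show ?case using eq by simp
  next
    case (right y a)
    have yaA: "opA y a \<in> A" using cl right by blast
    have "f (opA y a) = opA (f y) (f a)" using fh right by blast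
    also have "\<dots> = opA (g y) (f a)" using right by simp
    also have "\<dots> = opA (g y) (g a)" using R right gA by blast
    also have "\<dots> = g (opA y a)" using gh right by simp
    finally show ?case using yaA by simp
  next
    case (right_inv y a z)
    have yA: "y \<in> A" and fy: "f y = g y" using right_inv.IH by auto
    have aA: "a \<in> A" and zA: "z \<in> A" and zy: "opA z a = y" using right_inv.hyps by auto
    have faA: "f a \<in> A" using fA[OF aA] .
    have fzA: "f z \<in> A" using fA[OF zA] .
    have gzA: "g z \<in> A" using gA[OF zA] .
    have e1: "opA (f z) (f a) = f y" using fh[OF zA aA] zy by simp
    have e2: "g y = opA (g z) (g a)" using gh[OF zA aA] zy by simp
    have e3: "opA (g z) (g a) = opA (g z) (f a)" using R[OF aA gzA] by simp
    have eq2: "opA (f z) (f a) = opA (g z) (f a)" using e1 fy e2 e3 by simp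
    have tA: "opA (f z) (f a) \<in> A" using cl fzA faA by blast
    have uq: "\<exists>!x. x \<in> A \<and> opA x (f a) = opA (f z) (f a)" using ud faA tA by blast
    have "f z = g z" using uq fzA gzA eq2 by (metis (no_types, lifting))
    then show ?case using zA by simp
  qed
  show ?thesis
  proof
    fix y show "f y = g y"
    proof (cases "y \<in> A")
      case True
      then have "y \<in> inner_orbit A opA x0" using cq x0 by (simp add: connected_quandle_def)
      then show ?thesis using main by blast
    qed (simp add: fo go)
  qed
qed

theorem mainTheorem13:
  fixes A :: "'a set" and opA :: "'a \<Rightarrow> 'a \<Rightarrow> 'a"
    and B :: "'b set" and opB :: "'b \<Rightarrow> 'b \<Rightarrow> 'b"
    and p :: "'a \<Rightarrow> 'b" and L :: "('a \<Rightarrow> 'a) set"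
  assumes "finite A"
    and "connected_quandle A opA"
    and "covering A opA B opB p"
    and "subgroup_of_aut L A opA p"
    and "\<forall>x\<in>A. \<forall>y\<in>A. p x = p y \<longrightarrow> (\<exists>f\<in>L. f x = y)"
  shows "L = cov_aut A opA p \<and> (\<forall>b\<in>B. card {x\<in>A. p x = b} = card L)"
proof -
  have LA: "L \<subseteq> cov_aut A opA p" and idL: "id \<in> L"
    using assms(4) by (auto simp: subgroup_of_aut_def)
  have autA: "\<And>g x. g \<in> cov_aut A opA p \<Longrightarrow> x \<in> A \<Longrightarrow> g x \<in> A \<and> p (g x) = p x"
    unfolding cov_aut_def quandle_hom_def by blast
  have eqL: "L = cov_aut A opA p"
  proof (cases "A = {}")
    case True
    have "cov_aut A opA p \<subseteq> {id}"
    proof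
      fix g assume "g \<in> cov_aut A opA p"
      then have "\<forall>x. g x = x" using True unfolding cov_aut_def by blast
      then show "g \<in> {id}" by auto
    qed
    then show ?thesis using LA idL by blast
  next
    case False
    then obtain x0 where x0: "x0 \<in> A" by blast
    have "g \<in> L" if g: "g \<in> cov_aut A opA p" for g
    proof -
      obtain f where "f \<in> L" "f x0 = g x0" using assms(5) autA[OF g x0] x0 by metis
      moreover have "f = g" using aut_unique[OF assms(2,3) _ g x0] LA calculation by blast
      ultimately show ?thesis by simp
    qed
    then show ?thesis using LA by blast
  qed
  have "card {x\<in>A. p x = b} = card L" if b: "b \<in> B" for b
  proof -
    obtain x0 where x0: "x0 \<in> A" "p x0 = b"
    proof -
      have "p ` A = B" using assms(3) unfolding covering_def by blast
      then show ?thesis using b that by blast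
    qed
    have "bij_betw (\<lambda>f. f x0) L {x\<in>A. p x = b}"
      unfolding bij_betw_def
    proof
      show "inj_on (\<lambda>f. f x0) L"
      proof (rule inj_onI)
        fix f g assume "f \<in> L" "g \<in> L" "f x0 = g x0"
        then show "f = g" using aut_unique[OF assms(2,3), of f g x0] LA x0(1) by blast
      qed
      show "(\<lambda>f. f x0) ` L = {x\<in>A. p x = b}"
      proof
        show "(\<lambda>f. f x0) ` L \<subseteq> {x\<in>A. p x = b}"
        proof
          fix y assume "y \<in> (\<lambda>f. f x0) ` L"
          then obtain f where f: "f \<in> L" "y = f x0" by blast
          have "f \<in> cov_aut A opA p" using f LA by blast
          then have "f x0 \<in> A \<and> p (f x0) = p x0" using autA x0(1) by blast
          then show "y \<in> {x\<in>A. p x = b}" using f x0 by simp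
        qed
        show "{x\<in>A. p x = b} \<subseteq> (\<lambda>f. f x0) ` L"
        proof
          fix y assume "y \<in> {x\<in>A. p x = b}"
          then have yA: "y \<in> A" and py: "p x0 = p y" using x0 by auto
          then have "\<exists>f\<in>L. f x0 = y" using assms(5) x0(1) by blast
          then obtain f where "f \<in> L" "f x0 = y" by blast
          then show "y \<in> (\<lambda>f. f x0) ` L" by blast
        qed
      qed
    qed
    then show ?thesis by (simp add: bij_betw_same_card)
  qed
  then show ?thesis using eqL by blast
qed

end
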